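(* Let $\mathbf x_1,\dots,\mathbf x_n\in\mathbb R^d$ with $\|\mathbf x_i\|_2=1$ be such that $\mathbf H^\infty$ is positive definite. Suppose $y_i=\alpha(\boldsymbol\beta^\top\mathbf x_i)^p$ for all $i\in[n]$, where $\alpha\in\mathbb R$, $\boldsymbol\beta\in\mathbb R^d$, and $p=1$ or $p=2l$ for some positive integer $l$. Then $$\sqrt{\mathbf y^\top(\mathbf H^\infty)^{-1}\mathbf y}\le3p|\alpha|\,\|\boldsymbol\beta\|_2^p.$$
   Context: $\mathbf y=(y_1,\dots,y_n)^\top$. $\mathbf H^\infty\in\mathbb R^{n\times n}$ is given by $\mathbf H^\infty_{ij}=\mathbb E_{\mathbf w\sim\mathcal N(\mathbf 0,\mathbf I)}[\mathbf x_i^\top\mathbf x_j\mathbb I\{\mathbf w^\top\mathbf x_i\ge0,\mathbf w^\top\mathbf x_j\ge0\}]=\frac{\mathbf x_i^\top\mathbf x_j(\pi-\arccos(\mathbf x_i^\top\mathbf x_j))}{2\pi}$. *)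

theory Defs
  imports "HOL-Analysis.Analysis"
begin

definition H_inf :: "('n::finite \<Rightarrow> real^'d) \<Rightarrow> real^'n^'n" where
  "H_inf x = (\<chi> i j. (x i \<bullet> x j) * (pi - arccos (x i \<bullet> x j)) / (2 * pi))"

definition pos_def_mat :: "real^'n^'n \<Rightarrow> bool" where
  "pos_def_mat A \<longleftrightarrow> (\<forall>v. v \<noteq> 0 \<longrightarrow> v \<bullet> (A *v v) > 0)"

end

theory Submission
  imports Defs
begin

definition as :: "nat \<Rightarrow> real" where "as k = (-1)^k * ((-1/2) gchoose k)"
definition cs :: "nat \<Rightarrow> real" where "cs k = as k / (2 * real k + 1)"

lemma gchoose_Suc_rec: "(a::real) gchoose (Suc k) = (a gchoose k) * (a - real k) / (real k + 1)"
proof -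
  have "fact (Suc k) * (a gchoose Suc k) = (\<Prod>i = 0..<Suc k. a - of_nat i)"
    by (rule gbinomial_mult_fact)
  also have "\<dots> = (\<Prod>i = 0..<k. a - of_nat i) * (a - real k)" by simp
  also have "\<dots> = fact k * (a gchoose k) * (a - real k)" by (simp add: gbinomial_mult_fact)
  finally have "fact k * ((real k + 1) * (a gchoose Suc k)) = fact k * ((a gchoose k) * (a - real k))"
    by (simp add: algebra_simps)
  moreover have "fact k \<noteq> (0::real)" by simp
  ultimately have "(real k + 1) * (a gchoose Suc k) = (a gchoose k) * (a - real k)"
    by (rule mult_left_cancel[THEN iffD1, rotated])
  moreover have "real k + 1 \<noteq> 0" by linarith
  ultimately show ?thesis by (simp add: field_simps)
qed

lemma as_Suc: "as (Suc k) = as k * (2 * real k + 1) / (2 * real k + 2)"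
  unfolding as_def gchoose_Suc_rec by (simp add: field_simps)

lemma as_0: "as 0 = 1" by (simp add: as_def)

lemma as_lb: "as k \<ge> 1 / (2 * real k + 1)"
proof (induction k)
  case 0 then show ?case by (simp add: as_0)
next
  case (Suc k)
  have "1 / (2 * real (Suc k) + 1) \<le> 1 / (2 * real k + 2)" by (simp add: field_simps)
  also have "\<dots> = (1 / (2 * real k + 1)) * (2 * real k + 1) / (2 * real k + 2)" by (simp add: field_simps)
  also have "\<dots> \<le> as k * (2 * real k + 1) / (2 * real k + 2)"
    using Suc by (intro divide_right_mono mult_right_mono) auto
  finally show ?case by (simp add: as_Suc)
qed

lemma as_pos: "as k > 0"
  using as_lb[of k] by (smt (verit) divide_pos_pos of_nat_0_le_iff)

lemma cs_nonneg: "cs k \<ge> 0" using as_pos[of k] by (simp add: cs_def)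

lemma cs_lb: "cs k \<ge> 1 / (2 * real k + 1)^2"
proof -
  have "1 / (2 * real k + 1)^2 = (1 / (2 * real k + 1)) / (2 * real k + 1)"
    by (simp add: power2_eq_square)
  also have "\<dots> \<le> as k / (2 * real k + 1)"
    using as_lb[of k] by (intro divide_right_mono) auto
  finally show ?thesis by (simp add: cs_def)
qed

lemma as_series:
  assumes "\<bar>t\<bar> < 1"
  shows "(\<lambda>k. as k * t^(2*k)) sums inverse (sqrt (1 - t\<^sup>2))"
proof -
  have "\<bar>- t\<^sup>2\<bar> < 1" using assms by (simp add: abs_square_less_1)
  from gen_binomial_real[OF this, of "-1/2"]
  have "(\<lambda>n. ((-1/2) gchoose n) * (- t\<^sup>2)^n) sums (1 + - t\<^sup>2) powr (-1/2)" .
  moreover have "((-1/2) gchoose n) * (- t\<^sup>2)^n = as n * t^(2*n)" for n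
  proof -
    have "(- t\<^sup>2)^n = (-1)^n * t^(2*n)"
      by (subst power_minus) (simp only: power_mult)
    then show ?thesis unfolding as_def by (simp only: mult_ac)
  qed
  moreover have "(1 + - t\<^sup>2) powr (-1/2) = inverse (sqrt (1 - t\<^sup>2))"
  proof -
    have "0 < 1 - t\<^sup>2" using \<open>\<bar>- t\<^sup>2\<bar> < 1\<close> by simp
    then have "(1 - t\<^sup>2) powr (-1/2) = inverse ((1 - t\<^sup>2) powr (1/2))"
      by (simp add: powr_minus[symmetric])
    also have "(1 - t\<^sup>2) powr (1/2) = sqrt (1 - t\<^sup>2)"
      using \<open>0 < 1 - t\<^sup>2\<close> by (simp add: powr_half_sqrt)
    finally show ?thesis by simp
  qed
  ultimately show ?thesis by simp
qed

lemma sums_even_iff: "f sums x \<longleftrightarrow> (\<lambda> n. if even n then f (n div 2) else 0) sums (x::real)"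
proof
  assume "f sums x"
  from sums_if[OF sums_zero this] show "(\<lambda>n. if even n then f (n div 2) else 0) sums x"
    by auto
next
  assume "(\<lambda> n. if even n then f (n div 2) else 0) sums x"
  from LIMSEQ_linear[OF this[simplified sums_def] pos2, simplified sum_split_even_odd[simplified mult.commute]]
  show "f sums x"
    unfolding sums_def by auto
qed

lemma arcsin_series:
  assumes "\<bar>t\<bar> < 1"
  shows "(\<lambda>k. cs k * t^(2*k+1)) sums arcsin t"
proof -
  define f where "f n = (if even n then cs (n div 2) else 0)" for n
  have n_even: "even n \<Longrightarrow> 2 * (n div 2) = n" for n :: nat
    by presburger
  have dser: "(\<lambda>n. f n * real (Suc n) * x^n) sums inverse (sqrt (1 - x\<^sup>2))" if "\<bar>x\<bar> < 1" for x
  proof -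
    have "(\<lambda>n. f n * real (Suc n) * x^n) = (\<lambda>n. if even n then as (n div 2) * x^(2 * (n div 2)) else 0)"
    proof
      fix n show "f n * real (Suc n) * x^n = (if even n then as (n div 2) * x^(2 * (n div 2)) else 0)"
      proof (cases "even n")
        case True
        then have "Suc n = 2 * (n div 2) + 1" by presburger
        then have "real (Suc n) = 2 * real (n div 2) + 1" by simp
        moreover have "(2 * real (n div 2) + 1) \<noteq> 0" by (smt (verit) of_nat_0_le_iff)
        ultimately show ?thesis using True n_even[of n] by (simp add: f_def cs_def field_simps)
      qed (simp add: f_def)
    qed
    moreover have "(\<lambda>n. if even n then as (n div 2) * x^(2 * (n div 2)) else 0) sums inverse (sqrt (1 - x\<^sup>2))"
      using as_series[OF that] sums_even_iff[of "\<lambda>k. as k * x^(2*k)"] by simp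
    ultimately show ?thesis by simp
  qed
  have sser: "(\<lambda>n. f n * x^(Suc n)) sums (\<Sum>k. cs k * x^(2*k+1))"
     "summable (\<lambda>k. cs k * x^(2*k+1))" if "\<bar>x\<bar> < 1" for x
  proof -
    have "summable (\<lambda>k. as k * x^(2*k))" using as_series[OF that] sums_summable by blast
    moreover have "norm (cs k * x^(2*k+1)) \<le> as k * x^(2*k)" for k
    proof -
      have "\<bar>cs k\<bar> \<le> as k" using as_pos[of k] by (simp add: cs_def field_simps)
      moreover have "\<bar>x^(2*k+1)\<bar> \<le> x^(2*k)"
        using that by (simp add: abs_mult power_abs power_mult mult_left_le_one_le)
      ultimately show ?thesis by (simp add: abs_mult mult_mono')
    qed
    ultimately show "summable (\<lambda>k. cs k * x^(2*k+1))"
      by (rule summable_comparison_test'[where N=0])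
    then have "(\<lambda>k. cs k * x^(2*k+1)) sums (\<Sum>k. cs k * x^(2*k+1))" by (rule summable_sums)
    then have "(\<lambda>n. if even n then cs (n div 2) * x^(2*(n div 2)+1) else 0) sums (\<Sum>k. cs k * x^(2*k+1))"
      using sums_even_iff[of "\<lambda>k. cs k * x^(2*k+1)" "\<Sum>k. cs k * x^(2*k+1)"] by simp
    moreover have "(\<lambda>n. if even n then cs (n div 2) * x^(2*(n div 2)+1) else 0) = (\<lambda>n. f n * x^(Suc n))"
      using n_even by (auto simp: f_def fun_eq_iff)
    ultimately show "(\<lambda>n. f n * x^(Suc n)) sums (\<Sum>k. cs k * x^(2*k+1))" by simp
  qed
  define S where "S x = (\<Sum>n. f n * x^(Suc n))" for x
  have dS: "DERIV S x :> inverse (sqrt (1 - x\<^sup>2))" if "x \<in> {-1<..<1}" for x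
  proof -
    have "DERIV S x :> (\<Sum>n. f n * real (Suc n) * x^n)"
      unfolding S_def
    proof (rule DERIV_power_series'[where R=1])
      fix x' :: real assume "x' \<in> {-1<..<1}"
      then have "\<bar>x'\<bar> < 1" by auto
      from sums_summable[OF dser[OF this]] show "summable (\<lambda>n. f n * real (Suc n) * x'^n)" .
    qed (use that in auto)
    moreover have "\<bar>x\<bar> < 1" using that by auto
    then have "(\<Sum>n. f n * real (Suc n) * x^n) = inverse (sqrt (1 - x\<^sup>2))"
      by (rule sums_unique[OF dser, symmetric])
    ultimately show ?thesis by simp
  qed
  have "DERIV (\<lambda>x. S x - arcsin x) x :> 0" if "x \<in> {-1<..<1}" for x
    using DERIV_diff[OF dS[OF that] DERIV_arcsin[of x]] that by simp
  from DERIV_isconst3[of "-1" 1 t 0, OF _ _ _ this]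
  have "S t - arcsin t = S 0 - arcsin 0" using assms by (auto simp: abs_less_iff)
  moreover have "S 0 = 0" by (simp add: S_def)
  ultimately have "S t = arcsin t" by simp
  moreover have "S t = (\<Sum>k. cs k * t^(2*k+1))"
    unfolding S_def by (rule sums_unique[OF sser(1)[OF assms], symmetric])
  ultimately show ?thesis using summable_sums[OF sser(2)[OF assms]] by simp
qed


lemma pow_split: "(s::real) = (\<Sum>k\<in>K. g k) \<Longrightarrow> c * s^Suc m = (\<Sum>k\<in>K. c * s^m * g k)"
proof -
  assume "s = (\<Sum>k\<in>K. g k)"
  moreover have "(\<Sum>k\<in>K. c * s^m * g k) = c * s^m * (\<Sum>k\<in>K. g k)" by (simp add: sum_distrib_left)
  ultimately show ?thesis by simp
qed

lemma swap3: "(\<Sum>i\<in>I. \<Sum>j\<in>J. \<Sum>k\<in>K. F i j k) = (\<Sum>k\<in>K. \<Sum>i\<in>I. \<Sum>j\<in>J. (F i j k :: real))"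
proof -
  have "(\<Sum>i\<in>I. \<Sum>j\<in>J. \<Sum>k\<in>K. F i j k) = (\<Sum>i\<in>I. \<Sum>k\<in>K. \<Sum>j\<in>J. F i j k)"
    by (intro sum.cong refl) (rule sum.swap)
  also have "\<dots> = (\<Sum>k\<in>K. \<Sum>i\<in>I. \<Sum>j\<in>J. F i j k)" by (rule sum.swap)
  finally show ?thesis .
qed

lemma psd_pow:
  fixes x :: "'n::finite \<Rightarrow> real^'d"
  shows "0 \<le> (\<Sum>i\<in>UNIV. \<Sum>j\<in>UNIV. a i * a j * (x i \<bullet> x j)^m)"
proof (induction m arbitrary: a)
  case 0
  have "(\<Sum>i\<in>UNIV. \<Sum>j\<in>UNIV. a i * a j * (x i \<bullet> x j)^0) = (\<Sum>i\<in>UNIV. a i)^2"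
    by (simp add: power2_eq_square sum_product)
  then show ?case by simp
next
  case (Suc m)
  have "(\<Sum>i\<in>UNIV. \<Sum>j\<in>UNIV. a i * a j * (x i \<bullet> x j)^Suc m)
      = (\<Sum>i\<in>UNIV. \<Sum>j\<in>UNIV. \<Sum>k\<in>UNIV. (a i * x i $ k) * (a j * x j $ k) * (x i \<bullet> x j)^m)"
  proof (intro sum.cong refl)
    fix i j
    have "a i * a j * (x i \<bullet> x j)^Suc m = (\<Sum>k\<in>UNIV. a i * a j * (x i \<bullet> x j)^m * (x i $ k * x j $ k))"
      by (rule pow_split) (simp add: inner_vec_def)
    also have "\<dots> = (\<Sum>k\<in>UNIV. (a i * x i $ k) * (a j * x j $ k) * (x i \<bullet> x j)^m)"
      by (intro sum.cong refl) (simp only: mult_ac)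
    finally show "a i * a j * (x i \<bullet> x j)^Suc m = \<dots>" .
  qed
  also have "\<dots> = (\<Sum>k\<in>UNIV. \<Sum>i\<in>UNIV. \<Sum>j\<in>UNIV. (a i * x i $ k) * (a j * x j $ k) * (x i \<bullet> x j)^m)"
    by (rule swap3)
  also have "\<dots> \<ge> 0"
  proof (rule sum_nonneg)
    fix k :: 'd
    show "0 \<le> (\<Sum>i\<in>UNIV. \<Sum>j\<in>UNIV. (a i * x i $ k) * (a j * x j $ k) * (x i \<bullet> x j)^m)"
      using Suc.IH[of "\<lambda>i. a i * x i $ k"] by simp
  qed
  finally show ?case by simp
qed

lemma cs_pow:
  fixes x :: "'n::finite \<Rightarrow> real^'d" and \<beta> :: "real^'d"
  shows "(\<Sum>i\<in>UNIV. a i * (\<beta> \<bullet> x i)^m)^2 \<le> (\<beta> \<bullet> \<beta>)^m * (\<Sum>i\<in>UNIV. \<Sum>j\<in>UNIV. a i * a j * (x i \<bullet> x j)^m)"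
proof (induction m arbitrary: a)
  case 0
  show ?case by (simp add: power2_eq_square sum_product)
next
  case (Suc m)
  define S where "S = (\<chi> k. \<Sum>i\<in>UNIV. (a i * x i $ k) * (\<beta> \<bullet> x i)^m)"
  have "(\<Sum>i\<in>UNIV. a i * (\<beta> \<bullet> x i)^Suc m) = (\<Sum>i\<in>UNIV. \<Sum>k\<in>UNIV. \<beta> $ k * ((a i * x i $ k) * (\<beta> \<bullet> x i)^m))"
  proof (intro sum.cong refl)
    fix i
    have "a i * (\<beta> \<bullet> x i)^Suc m = (\<Sum>k\<in>UNIV. a i * (\<beta> \<bullet> x i)^m * (\<beta> $ k * x i $ k))"
      by (rule pow_split) (simp add: inner_vec_def)
    also have "\<dots> = (\<Sum>k\<in>UNIV. \<beta> $ k * ((a i * x i $ k) * (\<beta> \<bullet> x i)^m))"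
      by (intro sum.cong refl) (simp only: mult_ac)
    finally show "a i * (\<beta> \<bullet> x i)^Suc m = \<dots>" .
  qed
  also have "\<dots> = (\<Sum>k\<in>UNIV. \<Sum>i\<in>UNIV. \<beta> $ k * ((a i * x i $ k) * (\<beta> \<bullet> x i)^m))"
    by (rule sum.swap)
  also have "\<dots> = \<beta> \<bullet> S"
    unfolding S_def inner_vec_def by (simp add: sum_distrib_left)
  finally have e1: "(\<Sum>i\<in>UNIV. a i * (\<beta> \<bullet> x i)^Suc m) = \<beta> \<bullet> S" .
  have SS: "S \<bullet> S \<le> (\<Sum>k\<in>UNIV. (\<beta> \<bullet> \<beta>)^m * (\<Sum>i\<in>UNIV. \<Sum>j\<in>UNIV. (a i * x i $ k) * (a j * x j $ k) * (x i \<bullet> x j)^m))"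
  proof -
    have SSk: "S $ k * S $ k \<le> (\<beta> \<bullet> \<beta>)^m * (\<Sum>i\<in>UNIV. \<Sum>j\<in>UNIV. (a i * x i $ k) * (a j * x j $ k) * (x i \<bullet> x j)^m)" for k
    proof -
    have "S $ k * S $ k = (\<Sum>i\<in>UNIV. (a i * x i $ k) * (\<beta> \<bullet> x i)^m)^2"
      by (simp add: S_def power2_eq_square)
    also have "\<dots> \<le> (\<beta> \<bullet> \<beta>)^m * (\<Sum>i\<in>UNIV. \<Sum>j\<in>UNIV. (a i * x i $ k) * (a j * x j $ k) * (x i \<bullet> x j)^m)"
      using Suc.IH[of "\<lambda>i. a i * x i $ k"] by simp
    finally show ?thesis .
    qed
    show ?thesis unfolding inner_vec_def[of S S] by (rule sum_mono) (metis SSk inner_real_def)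
  qed
  have e3: "(\<Sum>k\<in>UNIV. (\<beta> \<bullet> \<beta>)^m * (\<Sum>i\<in>UNIV. \<Sum>j\<in>UNIV. (a i * x i $ k) * (a j * x j $ k) * (x i \<bullet> x j)^m))
      = (\<beta> \<bullet> \<beta>)^m * (\<Sum>i\<in>UNIV. \<Sum>j\<in>UNIV. a i * a j * (x i \<bullet> x j)^Suc m)"
  proof -
    have "(\<Sum>i\<in>UNIV. \<Sum>j\<in>UNIV. a i * a j * (x i \<bullet> x j)^Suc m)
      = (\<Sum>i\<in>UNIV. \<Sum>j\<in>UNIV. \<Sum>k\<in>UNIV. (a i * x i $ k) * (a j * x j $ k) * (x i \<bullet> x j)^m)"
    proof (intro sum.cong refl)
      fix i j
      have "a i * a j * (x i \<bullet> x j)^Suc m = (\<Sum>k\<in>UNIV. a i * a j * (x i \<bullet> x j)^m * (x i $ k * x j $ k))"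
        by (rule pow_split) (simp add: inner_vec_def)
      also have "\<dots> = (\<Sum>k\<in>UNIV. (a i * x i $ k) * (a j * x j $ k) * (x i \<bullet> x j)^m)"
        by (intro sum.cong refl) (simp only: mult_ac)
      finally show "a i * a j * (x i \<bullet> x j)^Suc m = \<dots>" .
    qed
    also have "\<dots> = (\<Sum>k\<in>UNIV. \<Sum>i\<in>UNIV. \<Sum>j\<in>UNIV. (a i * x i $ k) * (a j * x j $ k) * (x i \<bullet> x j)^m)"
      by (rule swap3)
    finally show ?thesis by (simp add: sum_distrib_left)
  qed
  have "(\<Sum>i\<in>UNIV. a i * (\<beta> \<bullet> x i)^Suc m)^2 \<le> (\<beta> \<bullet> \<beta>) * (S \<bullet> S)"
    unfolding e1 by (rule Cauchy_Schwarz_ineq)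
  also have "\<dots> \<le> (\<beta> \<bullet> \<beta>) * ((\<beta> \<bullet> \<beta>)^m * (\<Sum>i\<in>UNIV. \<Sum>j\<in>UNIV. a i * a j * (x i \<bullet> x j)^Suc m))"
    using SS e3 by (intro mult_left_mono) auto
  finally show ?case by (simp add: mult_ac)
qed


lemma psd_arcsin:
  fixes x :: "'n::finite \<Rightarrow> real^'d"
  assumes unit: "\<And>i. norm (x i) = 1"
  shows "cs m * (\<Sum>i\<in>UNIV. \<Sum>j\<in>UNIV. u i * u j * (x i \<bullet> x j)^(2*m+2))
     \<le> (\<Sum>i\<in>UNIV. \<Sum>j\<in>UNIV. u i * u j * ((x i \<bullet> x j) * arcsin (x i \<bullet> x j)))"
proof -
  define t where "t i j = x i \<bullet> x j" for i j
  have tb: "\<bar>t i j\<bar> \<le> 1" for i j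
    using Cauchy_Schwarz_ineq2[of "x i" "x j"] unit by (simp add: t_def)
  define Q where "Q n = (\<Sum>i\<in>UNIV. \<Sum>j\<in>UNIV. u i * u j * t i j ^ n)" for n
  define h where "h r = (\<Sum>i\<in>UNIV. \<Sum>j\<in>UNIV. u i * u j * ((r * t i j) * arcsin (r * t i j)))
      - cs m * r^(2*m+2) * Q (2*m+2)" for r
  have hpos: "h r \<ge> 0" if r: "0 < r" "r < 1" for r
  proof -
    have rt: "\<bar>r * t i j\<bar> < 1" for i j
    proof -
      have "r * \<bar>t i j\<bar> \<le> r * 1" using tb[of i j] r by (intro mult_left_mono) auto
      moreover have "\<bar>r * t i j\<bar> = r * \<bar>t i j\<bar>" using r by (simp add: abs_mult)
      ultimately show ?thesis using r by linarith
    qed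
    define F where "F k = cs k * r^(2*k+2) * Q (2*k+2)" for k
    have "(\<lambda>k. \<Sum>i\<in>UNIV. \<Sum>j\<in>UNIV. u i * u j * (r * t i j) * (cs k * (r * t i j)^(2*k+1)))
        sums (\<Sum>i\<in>UNIV. \<Sum>j\<in>UNIV. u i * u j * (r * t i j) * arcsin (r * t i j))"
      by (intro sums_sum sums_mult arcsin_series rt)
    moreover have "(\<Sum>i\<in>UNIV. \<Sum>j\<in>UNIV. u i * u j * (r * t i j) * (cs k * (r * t i j)^(2*k+1))) = F k" for k
      unfolding F_def Q_def
      by (simp add: sum_distrib_left power_mult_distrib mult_ac)
    ultimately have sF: "F sums (\<Sum>i\<in>UNIV. \<Sum>j\<in>UNIV. u i * u j * ((r * t i j) * arcsin (r * t i j)))"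
      by (simp add: mult_ac)
    have F0: "F k \<ge> 0" for k
      unfolding F_def Q_def t_def using cs_nonneg[of k] r psd_pow[of u x "2*k+2"]
      by simp
    have "sum F {m} \<le> suminf F"
      by (rule sum_le_suminf) (use sF sums_summable F0 in auto)
    moreover have "suminf F = (\<Sum>i\<in>UNIV. \<Sum>j\<in>UNIV. u i * u j * ((r * t i j) * arcsin (r * t i j)))"
      by (rule sums_unique[OF sF, symmetric])
    ultimately show ?thesis unfolding h_def F_def by simp
  qed
  have "continuous_on {0..1} h"
  proof -
    have rb: "\<forall>r\<in>{0..1}. -1 \<le> r * t i j \<and> r * t i j \<le> 1" for i j
    proof
      fix r :: real assume "r \<in> {0..1}"
      then have "r * \<bar>t i j\<bar> \<le> 1 * 1" using tb[of i j] by (intro mult_mono) auto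
      moreover have "\<bar>r * t i j\<bar> = r * \<bar>t i j\<bar>" using \<open>r \<in> {0..1}\<close> by (simp add: abs_mult)
      ultimately have "\<bar>r * t i j\<bar> \<le> 1" by linarith
      then show "-1 \<le> r * t i j \<and> r * t i j \<le> 1" by (simp add: abs_le_iff)
    qed
    have ca: "continuous_on {0..1} (\<lambda>r. arcsin (r * t i j))" for i j
      by (rule continuous_on_arcsin[OF _ rb]) (intro continuous_intros)
    show ?thesis unfolding h_def
      by (intro continuous_intros ca)
  qed
  then have "(h \<longlongrightarrow> h 1) (at_left 1)"
  proof -
    have "(h \<longlongrightarrow> h 1) (at 1 within {0..1})" using \<open>continuous_on {0..1} h\<close>
      unfolding continuous_on_def by simp
    then show ?thesis using at_within_Icc_at_left[of "0::real" 1] by simp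
  qed
  moreover have "eventually (\<lambda>r. 0 \<le> h r) (at_left (1::real))"
    using eventually_at_left_real[of 0 1] by (rule eventually_mono) (use hpos in auto)
  ultimately have "0 \<le> h 1"
    by (intro tendsto_lowerbound) auto
  then show ?thesis unfolding h_def Q_def t_def by simp
qed


lemma quad_bound:
  fixes H :: "real^'n::finite^'n" and y :: "real^'n"
  assumes pd: "pos_def_mat H" and C: "C \<ge> 0"
    and bnd: "\<And>u. (u \<bullet> y)^2 \<le> C^2 * (u \<bullet> (H *v u))"
  shows "sqrt (y \<bullet> (matrix_inv H *v y)) \<le> C"
proof -
  have ker: "H *v v = 0 \<Longrightarrow> v = 0" for v
    using pd unfolding pos_def_mat_def by force
  have "inj ((*v) H)"
  proof (rule injI)
    fix a b assume "H *v a = H *v b"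
    then have "H *v (a - b) = 0" by (simp add: matrix_vector_mult_diff_distrib)
    then have "a - b = 0" by (rule ker)
    then show "a = b" by simp
  qed
  then have "invertible H"
    using matrix_left_invertible_injective invertible_left_inverse by blast
  then have "H ** matrix_inv H = mat 1 \<and> matrix_inv H ** H = mat 1"
    unfolding invertible_def matrix_inv_def by (rule someI_ex)
  then have Hz: "H *v (matrix_inv H *v y) = y"
    by (simp add: matrix_vector_mul_assoc)
  define z where "z = matrix_inv H *v y"
  define q where "q = z \<bullet> (H *v z)"
  have q: "q = y \<bullet> z" using Hz by (simp add: q_def z_def inner_commute)
  have q0: "q \<ge> 0"
    using pd unfolding pos_def_mat_def q_def by (cases "z = 0") (auto intro: less_imp_le)
  have "q^2 \<le> C^2 * q" using bnd[of z] q by (simp add: q_def inner_commute)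
  then have "q \<le> C^2"
    using q0 by (cases "q = 0") (auto simp: power2_eq_square)
  then have "sqrt q \<le> sqrt (C^2)" by (rule real_sqrt_le_mono)
  then show ?thesis using C q by (simp add: z_def)
qed

lemma quad_expand: "(u::real^'n::finite) \<bullet> (M *v u) = (\<Sum>i\<in>UNIV. \<Sum>j\<in>UNIV. u$i * u$j * (M $ i $ j))"
  by (simp add: inner_vec_def matrix_vector_mult_def sum_distrib_left mult_ac)

lemma H_quad:
  fixes x :: "'n::finite \<Rightarrow> real^'d"
  assumes unit: "\<And>i. norm (x i) = 1"
  shows "u \<bullet> (H_inf x *v u) =
    (\<Sum>i\<in>UNIV. \<Sum>j\<in>UNIV. u$i * u$j * (x i \<bullet> x j)^1) / 4 +
    (\<Sum>i\<in>UNIV. \<Sum>j\<in>UNIV. u$i * u$j * ((x i \<bullet> x j) * arcsin (x i \<bullet> x j))) / (2*pi)"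
proof -
  have tb: "-1 \<le> x i \<bullet> x j \<and> x i \<bullet> x j \<le> 1" for i j
    using Cauchy_Schwarz_ineq2[of "x i" "x j"] unit by (simp add: abs_le_iff)
  have e: "(x i \<bullet> x j) * (pi - arccos (x i \<bullet> x j)) / (2 * pi) =
      (x i \<bullet> x j) / 4 + ((x i \<bullet> x j) * arcsin (x i \<bullet> x j)) / (2*pi)" for i j
    using tb[of i j] by (simp add: arccos_arcsin_eq field_simps)
  have "u \<bullet> (H_inf x *v u) = (\<Sum>i\<in>UNIV. \<Sum>j\<in>UNIV. u$i * u$j * (H_inf x $ i $ j))"
    by (rule quad_expand)
  also have "\<dots> = (\<Sum>i\<in>UNIV. \<Sum>j\<in>UNIV. u$i * u$j * (x i \<bullet> x j) / 4 +
      u$i * u$j * ((x i \<bullet> x j) * arcsin (x i \<bullet> x j)) / (2*pi))"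
  proof (intro sum.cong refl)
    fix i j
    have Hij: "H_inf x $ i $ j = (x i \<bullet> x j) / 4 + ((x i \<bullet> x j) * arcsin (x i \<bullet> x j)) / (2*pi)"
      by (simp only: H_inf_def vec_lambda_beta e)
    show "u$i * u$j * (H_inf x $ i $ j) = u$i * u$j * (x i \<bullet> x j) / 4 +
      u$i * u$j * ((x i \<bullet> x j) * arcsin (x i \<bullet> x j)) / (2*pi)"
      unfolding Hij by (simp add: distrib_left)
  qed
  also have "\<dots> = (\<Sum>i\<in>UNIV. \<Sum>j\<in>UNIV. u$i * u$j * (x i \<bullet> x j)^1) / 4 +
    (\<Sum>i\<in>UNIV. \<Sum>j\<in>UNIV. u$i * u$j * ((x i \<bullet> x j) * arcsin (x i \<bullet> x j))) / (2*pi)"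
    by (simp only: sum.distrib sum_divide_distrib power_one_right)
  finally show ?thesis .
qed


theorem theorem6p1:
  fixes x :: "'n::finite \<Rightarrow> real^'d"
    and y :: "real^'n"
    and \<alpha> :: real and \<beta> :: "real^'d" and p :: nat
  assumes unit: "\<And>i. norm (x i) = 1"
    and pd: "pos_def_mat (H_inf x)"
    and p: "p = 1 \<or> (\<exists>l::nat. l > 0 \<and> p = 2 * l)"
    and y: "\<And>i. y $ i = \<alpha> * (\<beta> \<bullet> x i) ^ p"
  shows "sqrt (y \<bullet> (matrix_inv (H_inf x) *v y)) \<le> 3 * real p * \<bar>\<alpha>\<bar> * norm \<beta> ^ p"
proof (rule quad_bound[OF pd])
  show "0 \<le> 3 * real p * \<bar>\<alpha>\<bar> * norm \<beta> ^ p" by simp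
  fix u :: "real^'n"
  define Q where "Q n = (\<Sum>i\<in>UNIV. \<Sum>j\<in>UNIV. u$i * u$j * (x i \<bullet> x j)^n)" for n
  define A where "A = (\<Sum>i\<in>UNIV. \<Sum>j\<in>UNIV. u$i * u$j * ((x i \<bullet> x j) * arcsin (x i \<bullet> x j)))"
  have Hq: "u \<bullet> (H_inf x *v u) = Q 1 / 4 + A / (2*pi)"
    unfolding Q_def A_def by (rule H_quad[where x=x]) (rule unit)
  have QA: "cs m * Q (2*m+2) \<le> A" for m
    unfolding Q_def A_def by (rule psd_arcsin[where x=x and m=m and u="\<lambda>i. u$i"]) (rule unit)
  have Q0: "Q n \<ge> 0" for n unfolding Q_def by (rule psd_pow)
  have "0 \<le> cs 0 * Q (2*0+2)" using cs_nonneg[of 0] Q0[of "2*0+2"] by (rule mult_nonneg_nonneg)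
  then have A0: "A \<ge> 0" using QA[of 0] by linarith
  have A2: "A / (2*pi) \<ge> 0" using A0 pi_gt_zero by simp
  have uy: "u \<bullet> y = \<alpha> * (\<Sum>i\<in>UNIV. u$i * (\<beta> \<bullet> x i)^p)"
    unfolding inner_vec_def[of u y] y by (simp add: sum_distrib_left mult_ac)
  have nb: "\<beta> \<bullet> \<beta> = norm \<beta> ^ 2" by (simp add: power2_norm_eq_inner)
  define K where "K = \<alpha>^2 * (norm \<beta>^2)^p"
  have K0: "K \<ge> 0" by (simp add: K_def)
  have "(u \<bullet> y)^2 = \<alpha>^2 * (\<Sum>i\<in>UNIV. u$i * (\<beta> \<bullet> x i)^p)^2"
    by (simp add: uy power_mult_distrib)
  also have "\<dots> \<le> \<alpha>^2 * ((norm \<beta>^2)^p * Q p)"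
  proof (rule mult_left_mono)
    show "(\<Sum>i\<in>UNIV. u$i * (\<beta> \<bullet> x i)^p)^2 \<le> (norm \<beta>^2)^p * Q p"
      using cs_pow[where a="\<lambda>i. u$i" and \<beta>=\<beta> and m=p and x=x] unfolding Q_def nb .
  qed simp
  finally have main: "(u \<bullet> y)^2 \<le> K * Q p" unfolding K_def by (simp only: mult.assoc)
  have C2: "(3 * real p * \<bar>\<alpha>\<bar> * norm \<beta> ^ p)^2 = K * (9 * real p ^ 2)"
  proof -
    have "(norm \<beta> ^ p)^2 = (norm \<beta>^2)^p" by (simp add: power_mult[symmetric] mult.commute)
    then show ?thesis by (simp add: K_def power_mult_distrib power2_abs)
  qed
  define V where "V = Q 1 / 4 + A / (2*pi)"
  have pi4: "pi < 4" by (rule pi_less_4)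
  have QV: "Q p \<le> 9 * real p ^ 2 * V"
  proof (cases "p = 1")
    case True
    then show ?thesis unfolding V_def using Q0[of 1] A2 by simp
  next
    case False
    with p obtain l where "l > 0" "p = 2 * l" by auto
    then have "p = 2*(l-1)+2" by simp
    then obtain m where pm: "p = 2*m+2" by blast
    have cpos: "cs m \<ge> 1 / (2 * real m + 1)^2" by (rule cs_lb)
    have "1 / (2 * real m + 1)^2 > 0" by (simp add: add_pos_nonneg)
    then have cp: "cs m > 0" using cpos by linarith
    have "cs m * Q p \<le> A" using QA[of m] pm by simp
    then have "Q p \<le> A / cs m" using cp by (simp add: field_simps)
    also have "\<dots> \<le> A * (2 * real m + 1)^2"
    proof -
      have "1 / cs m \<le> 1 / (1 / (2 * real m + 1)^2)"
        by (rule frac_le[of 1 1 "1/(2*real m+1)^2" "cs m"]) (use cpos \<open>1 / (2 * real m + 1)^2 > 0\<close> in auto)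
      then have "1 / cs m \<le> (2 * real m + 1)^2" by simp
      then have "A * (1 / cs m) \<le> A * (2 * real m + 1)^2" using A0 by (rule mult_left_mono)
      then show ?thesis by simp
    qed
    also have "\<dots> \<le> A * (9 * real p ^ 2 / (2*pi))"
    proof -
      have "2*pi*(2 * real m + 1)^2 \<le> 8 * (2 * real m + 1)^2" using pi4 by (intro mult_right_mono) auto
      also have "\<dots> \<le> 9 * real p ^2"
      proof -
        have rp: "real p = 2 * real m + 2" unfolding pm by simp
        have e1: "8 * (2 * real m + 1)^2 = 32 * (real m)^2 + 32 * real m + 8"
          by (simp add: power2_eq_square algebra_simps)
        have e2: "9 * (2 * real m + 2)^2 = 36 * (real m)^2 + 72 * real m + 36"
          by (simp add: power2_eq_square algebra_simps)
        have "0 \<le> (real m)^2" "0 \<le> real m" by simp_all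
        then show ?thesis unfolding rp using e1 e2 by linarith
      qed
      finally have "(2 * real m + 1)^2 * (2*pi) \<le> 9 * real p ^ 2" by (simp only: mult.commute)
      then have "(2 * real m + 1)^2 \<le> 9 * real p ^ 2 / (2*pi)" using pi_gt_zero by (subst pos_le_divide_eq) auto
      then show ?thesis using A0 by (rule mult_left_mono)
    qed
    also have "\<dots> = 9 * real p ^ 2 * (A / (2*pi))" by simp
    also have "\<dots> \<le> 9 * real p ^ 2 * V"
    proof (rule mult_left_mono)
      show "A / (2*pi) \<le> V" unfolding V_def using Q0[of 1] by simp
    qed simp
    finally show ?thesis .
  qed
  have "K * Q p \<le> K * (9 * real p ^ 2 * V)" using QV K0 by (rule mult_left_mono)
  then show "(u \<bullet> y)^2 \<le> (3 * real p * \<bar>\<alpha>\<bar> * norm \<beta> ^ p)^2 * (u \<bullet> (H_inf x *v u))"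
    using main unfolding C2 Hq V_def[symmetric] by (simp add: mult_ac)
qed

end
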